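(* Let $g\colon(0,1)\to\mathbb{R}$ be a continuous, strictly increasing function such that $g(1-a)=-g(a)$ for all $a\in(0,1)$ and $\lim_{a\to0^+}g(a)=-\infty$, and let $J(a,b)=g^{-1}\bigl(g(a)-g(b)\bigr)$ for $(a,b)\in S=(0,1)\times(0,1)$. Suppose $J$ is differentiable on $S$. Then for any $0<c<1$, the level curve $\{(a,b)\in S : J(a,b)=c\}$ is the graph of the unique solution $b=b(a)$, $0<a<1$, of the differential equation \[ \frac{db}{da}=\frac{g'(a)}{g'(b)} \] that passes through the point $(c,\tfrac12)$. *)

theory Defs
  imports "HOL-Analysis.Analysis"
begin

end

theory Submission
  imports Defs
begin


definition fgt :: "(real \<Rightarrow> real) \<Rightarrow> real \<Rightarrow> real \<Rightarrow> bool" where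
  "fgt g x c \<longleftrightarrow> (\<forall>\<delta>>0. \<exists>h. 0 < h \<and> h < \<delta> \<and> g (x + h) - g x > c * h)"
definition flt :: "(real \<Rightarrow> real) \<Rightarrow> real \<Rightarrow> real \<Rightarrow> bool" where
  "flt g x c \<longleftrightarrow> (\<forall>\<delta>>0. \<exists>h. 0 < h \<and> h < \<delta> \<and> g (x + h) - g x < c * h)"

lemma dini_mono:
  fixes f :: "real \<Rightarrow> real"
  assumes ab: "a \<le> b" and cont: "continuous_on {a..b} f"
    and H: "\<And>x. a \<le> x \<Longrightarrow> x < b \<Longrightarrow> flt f x c"
  shows "f b - f a \<le> c * (b - a)"
proof (rule ccontr)
  assume nt: "\<not> f b - f a \<le> c * (b - a)"
  define F where "F x = f x - c * x" for x
  have Fb: "F b > F a" using nt by (simp add: F_def algebra_simps)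
  define L where "L = (F a + F b) / 2"
  define A where "A = {x \<in> {a..b}. F x \<le> L}"
  have contF: "continuous_on {a..b} F" unfolding F_def by (intro continuous_intros cont)
  have clA: "closed A" unfolding A_def
    by (rule continuous_on_closed_Collect_le[OF contF continuous_on_const]) simp
  have aA: "a \<in> A" using ab Fb by (auto simp: A_def L_def)
  have bdd: "bdd_above A" unfolding A_def by (rule bdd_aboveI[of _ b]) auto
  define s where "s = Sup A"
  have sA: "s \<in> A" unfolding s_def using closed_contains_Sup[OF _ bdd clA] aA by blast
  have "s \<noteq> b" using sA Fb by (auto simp: A_def L_def)
  then have sb: "s < b" using sA by (auto simp: A_def)
  have as: "a \<le> s" using sA by (auto simp: A_def)
  obtain h where h: "0 < h" "h < b - s" "f (s + h) - f s < c * h"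
    using H[OF as sb] sb unfolding flt_def by (meson diff_gt_0_iff_gt)
  have "F (s + h) < F s" using h by (simp add: F_def algebra_simps)
  then have "s + h \<in> A" using sA h as by (auto simp: A_def)
  then have "s + h \<le> s" unfolding s_def by (rule cSup_upper[OF _ bdd])
  then show False using h by simp
qed

lemma transport_gt:
  fixes g T S :: "real \<Rightarrow> real"
  assumes x0: "x0 \<in> {0<..<1}" and x1: "x1 \<in> {0<..<1}"
    and Tx0: "T x0 = x1" and dT: "(T has_real_derivative \<tau>) (at x0)" and tpos: "\<tau> > 0"
    and Sx1: "S x1 = x0" and cS: "isCont S x1"
    and TS: "\<And>z. z \<in> {0<..<1} \<Longrightarrow> S z \<in> {0<..<1} \<and> T (S z) = z"
    and Smono: "strict_mono_on {0<..<1} S"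
    and gT: "\<And>y. y \<in> {0<..<1} \<Longrightarrow> g (T y) - g x1 = g y - g x0"
    and F: "fgt g x1 c" and cc: "c' < c * \<tau>" and c'pos: "c' > 0"
  shows "fgt g x0 c'"
  unfolding fgt_def
proof (intro allI impI)
  fix \<delta> :: real assume "\<delta> > 0"
  have cpos: "c > 0" using cc c'pos tpos by (metis mult_le_0_iff not_le order.strict_trans2 order.strict_implies_order)
  define \<tau>' where "\<tau>' = (c'/c + \<tau>) / 2"
  have t1: "c'/c < \<tau>'" "\<tau>' < \<tau>" using cc cpos by (auto simp: \<tau>'_def field_simps)
  have t2: "c * \<tau>' > c'" using t1 cpos by (simp add: field_simps)
  from dT have "(\<lambda>h. (T (x0 + h) - T x0) / h) \<midarrow>0\<rightarrow> \<tau>" by (simp add: DERIV_def)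
  then obtain d1 where d1: "d1 > 0" "\<And>h. h \<noteq> 0 \<Longrightarrow> \<bar>h\<bar> < d1 \<Longrightarrow> \<bar>(T (x0 + h) - T x0) / h - \<tau>\<bar> < \<tau> - \<tau>'"
    unfolding LIM_eq using t1 by (metis diff_gt_0_iff_gt diff_zero real_norm_def)
  from cS obtain d2 where d2: "d2 > 0" "\<And>z. z \<noteq> x1 \<Longrightarrow> \<bar>z - x1\<bar> < d2 \<Longrightarrow> \<bar>S z - S x1\<bar> < min \<delta> d1"
    unfolding isCont_def LIM_eq using \<open>\<delta>>0\<close> d1 by (metis min_less_iff_conj real_norm_def)
  have "min d2 (1 - x1) > 0" using d2 x1 by auto
  then obtain h' where h': "0 < h'" "h' < min d2 (1 - x1)" "g (x1 + h') - g x1 > c * h'"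
    using F unfolding fgt_def by blast
  define z where "z = x1 + h'"
  have z: "z \<in> {0<..<1}" using h' x1 by (auto simp: z_def)
  have Sz: "S z \<in> {0<..<1}" "T (S z) = z" using TS[OF z] by auto
  have "S z > S x1" using Smono x1 z h' unfolding strict_mono_on_def z_def by auto
  define h where "h = S z - x0"
  have hpos: "h > 0" using \<open>S z > S x1\<close> Sx1 by (simp add: h_def)
  have hlt: "\<bar>S z - S x1\<bar> < min \<delta> d1" using d2(2)[of z] h' by (auto simp: z_def)
  then have hd: "h < \<delta>" "h < d1" using hpos Sx1 by (auto simp: h_def)
  have Th: "T (x0 + h) = z" using Sz by (simp add: h_def)
  have "\<bar>(T (x0 + h) - T x0) / h - \<tau>\<bar> < \<tau> - \<tau>'" using d1(2)[of h] hpos hd by simp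
  then have "\<bar>(z - x1) / h - \<tau>\<bar> < \<tau> - \<tau>'" using Th Tx0 by simp
  then have "(z - x1) / h > \<tau>'" by (simp add: abs_less_iff)
  then have hh: "h' > \<tau>' * h" using hpos by (simp add: z_def field_simps)
  have "g (x0 + h) - g x0 = g z - g x1" using gT[of "x0 + h"] Th Sz by (simp add: h_def)
  also have "\<dots> > c * h'" using h' by (simp add: z_def)
  finally have "g (x0 + h) - g x0 > c * h'" .
  moreover have "c * h' \<ge> c * (\<tau>' * h)" using hh cpos by simp
  moreover have "c * (\<tau>' * h) > c' * h" using mult_strict_right_mono[OF t2 hpos] by (simp add: mult.assoc)
  ultimately have "g (x0 + h) - g x0 > c' * h" by linarith
  then show "\<exists>h>0. h < \<delta> \<and> g (x0 + h) - g x0 > c' * h" using hpos hd by (intro exI[of _ h]) auto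
qed

lemma transport_lt:
  fixes g T S :: "real \<Rightarrow> real"
  assumes x0: "x0 \<in> {0<..<1}" and x1: "x1 \<in> {0<..<1}"
    and Tx0: "T x0 = x1" and dT: "(T has_real_derivative \<tau>) (at x0)"
    and Sx1: "S x1 = x0" and cS: "isCont S x1"
    and TS: "\<And>z. z \<in> {0<..<1} \<Longrightarrow> S z \<in> {0<..<1} \<and> T (S z) = z"
    and Smono: "strict_mono_on {0<..<1} S"
    and gT: "\<And>y. y \<in> {0<..<1} \<Longrightarrow> g (T y) - g x1 = g y - g x0"
    and F: "flt g x1 c" and cc: "c' > c * \<tau>" and cpos: "c \<ge> 0"
  shows "flt g x0 c'"
  unfolding flt_def
proof (intro allI impI)
  fix \<delta> :: real assume "\<delta> > 0"
  define \<eta> where "\<eta> = (c' - c * \<tau>) / (2 * (c + 1))"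
  have "c' - c * \<tau> > 0" using cc by simp
  then have eta: "\<eta> > 0" using cpos unfolding \<eta>_def by (intro divide_pos_pos) auto
  have "c * \<eta> < (c' - c * \<tau>)" 
  proof -
    have "c * \<eta> = (c / (c+1)) * ((c' - c * \<tau>) / 2)" by (simp add: \<eta>_def field_simps)
    also have "\<dots> \<le> 1 * ((c' - c * \<tau>) / 2)" 
      by (rule mult_right_mono) (use cpos cc in auto)
    also have "\<dots> < c' - c * \<tau>" using cc by (simp add: field_simps)
    finally show ?thesis .
  qed
  then have t2: "c * (\<tau> + \<eta>) < c'" by (simp add: algebra_simps)
  from dT have "(\<lambda>h. (T (x0 + h) - T x0) / h) \<midarrow>0\<rightarrow> \<tau>" by (simp add: DERIV_def)
  then obtain d1 where d1: "d1 > 0" "\<And>h. h \<noteq> 0 \<Longrightarrow> \<bar>h\<bar> < d1 \<Longrightarrow> \<bar>(T (x0 + h) - T x0) / h - \<tau>\<bar> < \<eta>"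
    unfolding LIM_eq using eta by (metis diff_zero real_norm_def)
  from cS obtain d2 where d2: "d2 > 0" "\<And>z. z \<noteq> x1 \<Longrightarrow> \<bar>z - x1\<bar> < d2 \<Longrightarrow> \<bar>S z - S x1\<bar> < min \<delta> d1"
    unfolding isCont_def LIM_eq using \<open>\<delta>>0\<close> d1 by (metis min_less_iff_conj real_norm_def)
  have "min d2 (1 - x1) > 0" using d2 x1 by auto
  then obtain h' where h': "0 < h'" "h' < min d2 (1 - x1)" "g (x1 + h') - g x1 < c * h'"
    using F unfolding flt_def by blast
  define z where "z = x1 + h'"
  have z: "z \<in> {0<..<1}" using h' x1 by (auto simp: z_def)
  have Sz: "S z \<in> {0<..<1}" "T (S z) = z" using TS[OF z] by auto
  have "S z > S x1" using Smono x1 z h' unfolding strict_mono_on_def z_def by auto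
  define h where "h = S z - x0"
  have hpos: "h > 0" using \<open>S z > S x1\<close> Sx1 by (simp add: h_def)
  have hlt: "\<bar>S z - S x1\<bar> < min \<delta> d1" using d2(2)[of z] h' by (auto simp: z_def)
  then have hd: "h < \<delta>" "h < d1" using hpos Sx1 by (auto simp: h_def)
  have Th: "T (x0 + h) = z" using Sz by (simp add: h_def)
  have "\<bar>(T (x0 + h) - T x0) / h - \<tau>\<bar> < \<eta>" using d1(2)[of h] hpos hd by simp
  then have "\<bar>(z - x1) / h - \<tau>\<bar> < \<eta>" using Th Tx0 by simp
  then have "(z - x1) / h < \<tau> + \<eta>" by (simp add: abs_less_iff)
  then have hh: "h' < (\<tau> + \<eta>) * h" using hpos by (simp add: z_def field_simps)
  have "g (x0 + h) - g x0 = g z - g x1" using gT[of "x0 + h"] Th Sz by (simp add: h_def)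
  also have "\<dots> < c * h'" using h' by (simp add: z_def)
  finally have "g (x0 + h) - g x0 < c * h'" .
  moreover have "c * h' \<le> c * ((\<tau> + \<eta>) * h)" using hh cpos by (simp add: mult_left_mono)
  moreover have "c * ((\<tau> + \<eta>) * h) < c' * h" using mult_strict_right_mono[OF t2 hpos] by (simp add: mult.assoc)
  ultimately have "g (x0 + h) - g x0 < c' * h" by linarith
  then show "\<exists>h>0. h < \<delta> \<and> g (x0 + h) - g x0 < c' * h" using hpos hd by (intro exI[of _ h]) auto
qed




locale gsetting =
  fixes g :: "real \<Rightarrow> real"
  assumes g_cont: "continuous_on {0<..<1} g"
    and g_mono: "strict_mono_on {0<..<1} g"
    and g_sym: "\<forall>a\<in>{0<..<1}. g (1 - a) = - g a"
    and g_lim: "filterlim g at_bot (at_right 0)"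
    and J_diff: "\<forall>p\<in>{0<..<1} \<times> {0<..<1}. (\<lambda>(a, b). inv_into {0<..<1} g (g a - g b)) differentiable (at p)"
begin

abbreviation "I \<equiv> {0<..<1::real}"
definition "k = inv_into I g"
definition "J = (\<lambda>(a, b). k (g a - g b))"
definition "T x y = k (g y - g x)"
definition "S x z = k (g z + g x)"

lemma g_less: "x \<in> I \<Longrightarrow> y \<in> I \<Longrightarrow> x < y \<Longrightarrow> g x < g y"
  using g_mono unfolding strict_mono_on_def by blast

lemma g_le_iff: "x \<in> I \<Longrightarrow> y \<in> I \<Longrightarrow> g x \<le> g y \<longleftrightarrow> x \<le> y"
  by (metis g_less le_less linorder_not_le)

lemma g_inj: "inj_on g I"
  using g_mono by (rule strict_mono_on_imp_inj_on)

lemma g_half: "g (1/2) = 0"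
  using g_sym by (auto dest: bspec[of _ _ "1/2"])

lemma g_below: "\<exists>a\<in>I. g a < s"
proof -
  have "\<forall>\<^sub>F x in at_right 0. g x \<le> s - 1" using g_lim by (simp add: filterlim_at_bot)
  then obtain b where b: "b > 0" "\<And>y. y > 0 \<Longrightarrow> y < b \<Longrightarrow> g y \<le> s - 1"
    by (auto simp: eventually_at_right_field)
  define a where "a = min b (1/2) / 2"
  have "a \<in> I" "a < b" using b by (auto simp: a_def)
  then show ?thesis using b(2)[of a] by (intro bexI[of _ a]) auto
qed

lemma g_above: "\<exists>a\<in>I. g a > s"
proof -
  obtain a where a: "a \<in> I" "g a < - s" using g_below by blast
  then have "1 - a \<in> I" "g (1 - a) > s" using g_sym by auto
  then show ?thesis by blast
qed

lemma g_surj: "s \<in> g ` I"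
proof -
  obtain a where a: "a \<in> I" "g a < s" using g_below by blast
  obtain b where b: "b \<in> I" "g b > s" using g_above by blast
  have ab: "a \<le> b" using a b g_le_iff by force
  have "continuous_on {a..b} g" using a b by (intro continuous_on_subset[OF g_cont]) auto
  then obtain x where "x \<ge> a" "x \<le> b" "g x = s" using IVT'[of g a s b] a b ab by auto
  moreover then have "x \<in> I" using a b by auto
  ultimately show ?thesis by blast
qed

lemma k_in: "k s \<in> I"
  unfolding k_def using g_surj by (rule inv_into_into)

lemma g_k: "g (k s) = s"
  unfolding k_def using g_surj by (rule f_inv_into_f)

lemma k_g: "y \<in> I \<Longrightarrow> k (g y) = y"
  unfolding k_def using g_inj by (rule inv_into_f_f)

lemma k_less: "s < t \<Longrightarrow> k s < k t"
  by (metis g_k g_le_iff k_in linorder_not_le order_less_irrefl)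

lemma k_half: "k 0 = 1/2"
  using k_g[of "1/2"] g_half by simp

lemma J_eq: "J (y, x) = T x y" by (simp add: J_def T_def)

lemma J_orig: "(\<lambda>(a, b). inv_into {0<..<1} g (g a - g b)) = J"
  by (simp add: J_def k_def)

lemma S_J: "x \<in> I \<Longrightarrow> S x z = J (z, 1 - x)"
  using g_sym by (simp add: J_def S_def)

lemma T_in: "T x y \<in> I" unfolding T_def by (rule k_in)
lemma S_in: "S x y \<in> I" unfolding S_def by (rule k_in)
lemma g_T: "g (T x y) = g y - g x" by (simp add: T_def g_k)
lemma g_S: "g (S x y) = g y + g x" by (simp add: S_def g_k)
lemma T_S: "z \<in> I \<Longrightarrow> T x (S x z) = z" by (simp add: T_def g_S k_g)
lemma S_T: "z \<in> I \<Longrightarrow> S x (T x z) = z" by (simp add: S_def g_T k_g)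
lemma T_self: "T x x = 1/2" by (simp add: T_def k_half)
lemma S_half: "x \<in> I \<Longrightarrow> S x (1/2) = x" by (simp add: S_def g_half k_g)

lemma T_mono: "strict_mono_on I (T x)"
  unfolding strict_mono_on_def T_def using g_less k_less by simp
lemma S_mono: "strict_mono_on I (S x)"
  unfolding strict_mono_on_def S_def using g_less k_less by simp

lemma J_differentiable: "a \<in> I \<Longrightarrow> b \<in> I \<Longrightarrow> J differentiable (at (a, b))"
  using J_diff J_orig by auto

lemma T_diff: assumes "x \<in> I" "y \<in> I" shows "T x differentiable (at y)"
proof -
  have "(J \<circ> (\<lambda>y. (y, x))) differentiable (at y)"
    by (rule differentiable_chain_at) (use assms J_differentiable in auto)
  moreover have "J \<circ> (\<lambda>y. (y, x)) = T x" by (auto simp: J_eq)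
  ultimately show ?thesis by simp
qed

lemma S_diff: assumes "x \<in> I" "y \<in> I" shows "S x differentiable (at y)"
proof -
  have "(J \<circ> (\<lambda>y. (y, 1 - x))) differentiable (at y)"
    by (rule differentiable_chain_at) (use assms J_differentiable in auto)
  moreover have "J \<circ> (\<lambda>y. (y, 1 - x)) = S x" using assms by (auto simp: S_J)
  ultimately show ?thesis by simp
qed

lemma T_deriv: "x \<in> I \<Longrightarrow> y \<in> I \<Longrightarrow> (T x has_real_derivative deriv (T x) y) (at y)"
  using T_diff DERIV_deriv_iff_real_differentiable by blast
lemma S_deriv: "x \<in> I \<Longrightarrow> y \<in> I \<Longrightarrow> (S x has_real_derivative deriv (S x) y) (at y)"
  using S_diff DERIV_deriv_iff_real_differentiable by blast

lemma deriv_nonneg: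
  assumes "(f has_real_derivative D) (at y)" "y \<in> I" "strict_mono_on I f"
  shows "D \<ge> 0"
proof (rule ccontr)
  assume "\<not> D \<ge> 0"
  then obtain d where d: "d > 0" "\<And>h. h > 0 \<Longrightarrow> h < d \<Longrightarrow> f (y + h) < f y"
    using DERIV_neg_dec_right[OF assms(1)] by force
  have "0 < y" "y < 1" using assms(2) by auto
  have "\<exists>h. 0 < h \<and> h < d \<and> y + h < 1"
    using d \<open>y<1\<close> by (intro exI[of _ "min d (1 - y) / 2"]) (auto simp: min_def field_simps)
  then obtain h where "h > 0" "h < d" "y + h < 1" by blast
  then have "h > 0" "h < d" "y + h \<in> I" using \<open>0<y\<close> by auto
  then have "f y < f (y + h)" using assms(3) assms(2) unfolding strict_mono_on_def by auto
  then show False using d(2)[of h] \<open>h>0\<close> \<open>h<d\<close> by simp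
qed

definition "tau x = deriv (T x) x"
definition "sg x = deriv (S x) (1/2)"

lemma tau_sg: assumes x: "x \<in> I" shows "tau x > 0" "sg x > 0" "tau x * sg x = 1"
proof -
  have h: "1/2 \<in> I" by simp
  have dS: "(S x has_real_derivative sg x) (at (1/2))" unfolding sg_def using S_deriv[OF x h] .
  have dT: "(T x has_real_derivative tau x) (at (S x (1/2)))" unfolding tau_def using T_deriv[OF x x] S_half[OF x] by simp
  have "(T x \<circ> S x has_real_derivative tau x * sg x) (at (1/2))"
    by (rule DERIV_chain[OF dT dS])
  moreover have "(T x \<circ> S x has_real_derivative 1) (at (1/2))"
    by (rule has_field_derivative_transform_within_open[OF DERIV_ident, of I]) (auto simp: T_S)
  ultimately show ts: "tau x * sg x = 1" by (rule DERIV_unique)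
  have "tau x \<ge> 0" using deriv_nonneg[OF T_deriv[OF x x] x T_mono] by (simp add: tau_def)
  moreover have "sg x \<ge> 0" using deriv_nonneg[OF dS h S_mono] .
  ultimately show "tau x > 0" "sg x > 0" using ts by (auto simp: less_le)
qed

lemma T_isCont: "x \<in> I \<Longrightarrow> y \<in> I \<Longrightarrow> isCont (T x) y"
  using T_deriv DERIV_isCont by blast
lemma S_isCont: "x \<in> I \<Longrightarrow> y \<in> I \<Longrightarrow> isCont (S x) y"
  using S_deriv DERIV_isCont by blast

lemma from_e_gt:
  assumes x: "x \<in> I" and F: "fgt g (1/2) c" and cc: "c' < c * tau x" and c'pos: "c' > 0"
  shows "fgt g x c'"
  by (rule transport_gt[of x "1/2" "T x" "tau x" "S x" g c c'])
     (use x F cc c'pos tau_sg T_deriv S_isCont T_S S_in S_mono g_T g_half T_self S_half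
      in \<open>auto simp: tau_def\<close>)

lemma from_e_lt:
  assumes x: "x \<in> I" and F: "flt g (1/2) c" and cc: "c' > c * tau x" and cpos: "c \<ge> 0"
  shows "flt g x c'"
  by (rule transport_lt[of x "1/2" "T x" "tau x" "S x" g c c'])
     (use x F cc cpos T_deriv S_isCont T_S S_in S_mono g_T g_half T_self S_half
      in \<open>auto simp: tau_def\<close>)

lemma to_e_gt:
  assumes x: "x \<in> I" and F: "fgt g x c" and cc: "c' < c * sg x" and c'pos: "c' > 0"
  shows "fgt g (1/2) c'"
  by (rule transport_gt[of "1/2" x "S x" "sg x" "T x" g c c'])
     (use x F cc c'pos tau_sg S_deriv T_isCont S_T T_in T_mono g_S g_half T_self S_half
      in \<open>auto simp: sg_def\<close>)

end



context gsetting begin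

lemma bound_e: "\<exists>C>0. \<exists>\<delta>>0. \<forall>h. 0 < h \<and> h < \<delta> \<longrightarrow> g (1/2 + h) - g (1/2) \<le> C * h"
proof (rule ccontr)
  assume na: "\<not> ?thesis"
  have allgt: "fgt g (1/2) C" if "C > 0" for C
    using na that unfolding fgt_def by (force simp: not_le)
  have allx: "fgt g x C" if x: "x \<in> I" and C: "C > 0" for x C
  proof -
    have t: "tau x > 0" using tau_sg[OF x] by simp
    show ?thesis
      by (rule from_e_gt[OF x allgt[of "2 * C / tau x"]]) (use t C in auto)
  qed
  define dd where "dd = g (3/4) - g (1/4)"
  have dd: "dd > 0" unfolding dd_def using g_less[of "1/4" "3/4"] by simp
  define \<epsilon> where "\<epsilon> = 1 / (4 * dd)"
  have eps: "\<epsilon> > 0" using dd by (simp add: \<epsilon>_def)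
  define F where "F y = y - \<epsilon> * g y" for y
  have "F (3/4) - F (1/4) \<le> 0 * (3/4 - 1/4)"
  proof (rule dini_mono)
    show "continuous_on {1/4..3/4} F" unfolding F_def
      by (intro continuous_intros continuous_on_subset[OF g_cont]) auto
    fix y :: real assume y: "1/4 \<le> y" "y < 3/4"
    then have yI: "y \<in> I" by auto
    have fg: "fgt g y (1/\<epsilon>)" using allx[OF yI] eps by simp
    show "flt F y 0" unfolding flt_def
    proof (intro allI impI)
      fix \<delta> :: real assume "\<delta> > 0"
      then obtain h where h: "0 < h" "h < \<delta>" "g (y + h) - g y > (1/\<epsilon>) * h" using fg unfolding fgt_def by blast
      have "\<epsilon> * (g (y + h) - g y) > \<epsilon> * ((1/\<epsilon>) * h)" using h eps by (intro mult_strict_left_mono) auto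
      then have "\<epsilon> * (g (y + h) - g y) > h" using eps by simp
      then have "F (y + h) - F y < 0 * h" by (simp add: F_def algebra_simps)
      then show "\<exists>h>0. h < \<delta> \<and> F (y + h) - F y < 0 * h" using h by blast
    qed
  qed simp
  then have "1/2 - \<epsilon> * dd \<le> 0" by (simp add: F_def dd_def algebra_simps)
  moreover have "\<epsilon> * dd = 1/4" using dd by (simp add: \<epsilon>_def)
  ultimately show False by simp
qed

lemma bound_all:
  assumes x: "x \<in> I"
  shows "\<exists>C>0. \<exists>\<delta>>0. \<forall>h. 0 < h \<and> h < \<delta> \<longrightarrow> g (x + h) - g x \<le> C * h"
proof (rule ccontr)
  assume na: "\<not> ?thesis"
  have allgt: "fgt g x C" if "C > 0" for C
    using na that unfolding fgt_def by (force simp: not_le)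
  obtain C0 \<delta>0 where C0: "C0 > 0" "\<delta>0 > 0" "\<And>h. 0 < h \<Longrightarrow> h < \<delta>0 \<Longrightarrow> g (1/2 + h) - g (1/2) \<le> C0 * h"
    using bound_e by blast
  have s: "sg x > 0" using tau_sg[OF x] by simp
  have "fgt g (1/2) C0"
    by (rule to_e_gt[OF x allgt[of "2 * C0 / sg x"]]) (use s C0 in auto)
  then obtain h where "0 < h" "h < \<delta>0" "g (1/2 + h) - g (1/2) > C0 * h"
    using C0 unfolding fgt_def by blast
  then show False using C0(3) by force
qed

end



context gsetting begin

lemma lipschitz_interval:
  "\<exists>\<alpha> \<beta> L. 0 < \<alpha> \<and> \<alpha> < \<beta> \<and> \<beta> < 1 \<and> L > 0 \<and>
     (\<forall>u v. \<alpha> \<le> u \<and> u < v \<and> v \<le> \<beta> \<longrightarrow> g v - g u \<le> L * (v - u))"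
proof -
  define S0 where "S0 = {1/4..3/4::real}"
  define N where "N n = real n + 5" for n :: nat
  have Npos: "N n \<ge> 5" for n by (simp add: N_def)
  define C where "C n = {y \<in> S0. \<forall>h. 0 < h \<and> h \<le> 1 / N n \<longrightarrow> g (y + h) - g y \<le> N n * h}" for n
  have clC: "closed (C n)" for n
  proof -
    have cl: "closed {y \<in> S0. g (y + h) - g y \<le> N n * h}" if h: "0 < h" "h \<le> 1 / N n" for h
    proof (rule continuous_on_closed_Collect_le)
      have "1 / N n \<le> 1/5" using Npos[of n] by (simp add: field_simps)
      then have "h \<le> 1/5" using h by simp
      then have "(\<lambda>y. y + h) ` S0 \<subseteq> I" using h by (auto simp: S0_def)
      then show "continuous_on S0 (\<lambda>y. g (y + h) - g y)"
        by (intro continuous_intros continuous_on_compose2[OF g_cont])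
           (auto simp: S0_def)
    qed (auto simp: S0_def)
    have "C n = S0 \<inter> (\<Inter>h\<in>{0<..1 / N n}. {y \<in> S0. g (y + h) - g y \<le> N n * h})"
      by (auto simp: C_def)
    also have "closed \<dots>" using cl by (intro closed_Int closed_INT) (auto simp: S0_def)
    finally show ?thesis .
  qed
  have cover: "\<exists>n. y \<in> C n" if y: "y \<in> S0" for y
  proof -
    have yI: "y \<in> I" using y by (auto simp: S0_def)
    obtain Cy \<delta> where Cy: "Cy > 0" "\<delta> > 0" "\<And>h. 0 < h \<Longrightarrow> h < \<delta> \<Longrightarrow> g (y + h) - g y \<le> Cy * h"
      using bound_all[OF yI] by blast
    define n where "n = nat \<lceil>Cy + 1/\<delta>\<rceil>"
    have n1: "real n \<ge> Cy + 1/\<delta>" unfolding n_def by linarith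
    have "N n > 1/\<delta>" using n1 Cy by (simp add: N_def)
    then have nd: "1 / N n < \<delta>" using Cy Npos[of n] by (simp add: field_simps)
    have nc: "N n \<ge> Cy" using n1 Cy \<open>\<delta>>0\<close> by (simp add: N_def) (smt (verit) divide_pos_pos)
    have "\<forall>h. 0 < h \<and> h \<le> 1 / N n \<longrightarrow> g (y + h) - g y \<le> N n * h"
    proof (intro allI impI)
      fix h assume h: "0 < h \<and> h \<le> 1 / N n"
      then have "g (y + h) - g y \<le> Cy * h" using Cy(3)[of h] nd by auto
      also have "\<dots> \<le> N n * h" using nc h by (intro mult_right_mono) auto
      finally show "g (y + h) - g y \<le> N n * h" .
    qed
    then show ?thesis using y by (auto simp: C_def)
  qed
  have "\<exists>n. \<not> S0 \<subseteq> closure (S0 - C n)"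
  proof (rule ccontr)
    assume "\<not> ?thesis"
    then have dense: "\<And>n. S0 \<subseteq> closure (S0 - C n)" by blast
    have "S0 \<subseteq> closure (\<Inter>(range (\<lambda>n. S0 - C n)))"
    proof (rule Baire)
      show "closed S0" by (simp add: S0_def)
      show "countable (range (\<lambda>n. S0 - C n))" by simp
      fix T assume "T \<in> range (\<lambda>n. S0 - C n)"
      then obtain n where n: "T = S0 - C n" by blast
      have "closedin (top_of_set S0) (C n)" using clC[of n] by (intro closed_subset) (auto simp: C_def)
      then have "openin (top_of_set S0) (S0 - C n)" by (intro openin_diff) auto
      then show "openin (top_of_set S0) T \<and> S0 \<subseteq> closure T" using n dense by auto
    qed
    moreover have "\<Inter>(range (\<lambda>n. S0 - C n)) = {}" using cover by blast
    moreover have "(1/2::real) \<in> S0" by (simp add: S0_def)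
    ultimately show False by (metis closure_empty empty_iff subsetD)
  qed
  then obtain n y where y: "y \<in> S0" "y \<notin> closure (S0 - C n)" by blast
  then obtain \<epsilon> where eps: "\<epsilon> > 0" "\<And>z. z \<in> S0 - C n \<Longrightarrow> \<not> dist z y < \<epsilon>"
    unfolding closure_approachable by blast
  define r where "r = min (\<epsilon>/2) (1 / N n)"
  have r: "r > 0" "r < \<epsilon>" "r \<le> 1 / N n" using eps Npos[of n] by (auto simp: r_def)
  have r5: "r \<le> 1/5" using r(3) Npos[of n] by (smt (verit) frac_le zero_less_one)
  define \<alpha> where "\<alpha> = (if y \<le> 1/2 then y else y - r)"
  define \<beta> where "\<beta> = \<alpha> + r"
  have ab: "1/4 \<le> \<alpha>" "\<beta> \<le> 3/4" "\<alpha> < \<beta>" "\<alpha> \<le> y" "y \<le> \<beta>"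
    using y(1) r r5 by (auto simp: \<alpha>_def \<beta>_def S0_def)
  have inC: "u \<in> C n" if "\<alpha> \<le> u" "u \<le> \<beta>" for u
  proof (rule ccontr)
    assume "u \<notin> C n"
    moreover have "u \<in> S0" using that ab by (auto simp: S0_def)
    ultimately have "\<not> dist u y < \<epsilon>" using eps by blast
    moreover have "dist u y \<le> r" using that ab by (auto simp: dist_real_def \<beta>_def)
    ultimately show False using r by simp
  qed
  show ?thesis
  proof (intro exI conjI allI impI)
    show "0 < \<alpha>" "\<alpha> < \<beta>" "\<beta> < 1" using ab by auto
    show "N n > 0" using Npos[of n] by simp
    fix u v assume uv: "\<alpha> \<le> u \<and> u < v \<and> v \<le> \<beta>"
    then have "u \<in> C n" using inC by auto
    moreover have "0 < v - u" "v - u \<le> 1 / N n" using uv r by (auto simp: \<beta>_def)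
    ultimately have "g (u + (v - u)) - g u \<le> N n * (v - u)" unfolding C_def by blast
    then show "g v - g u \<le> N n * (v - u)" by simp
  qed
qed

end



context gsetting begin

lemma pos_e: "\<exists>c2>0. fgt g (1/2) c2"
proof (rule ccontr)
  assume na: "\<not> ?thesis"
  have allt: "flt g (1/2) c" if c: "c > 0" for c
  proof -
    have "\<not> fgt g (1/2) (c/2)" using na c by auto
    then obtain \<delta> where d: "\<delta> > 0" "\<And>h. 0 < h \<Longrightarrow> h < \<delta> \<Longrightarrow> g (1/2 + h) - g (1/2) \<le> c/2 * h"
      unfolding fgt_def by (meson not_less)
    show ?thesis unfolding flt_def
    proof (intro allI impI)
      fix \<delta>' :: real assume "\<delta>' > 0"
      define h where "h = min \<delta> \<delta>' / 2"
      have h: "0 < h" "h < \<delta>" "h < \<delta>'" using d \<open>\<delta>'>0\<close> by (auto simp: h_def min_def field_simps)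
      have "g (1/2 + h) - g (1/2) \<le> c/2 * h" using d h by auto
      also have "\<dots> < c * h" using c h by simp
      finally show "\<exists>h>0. h < \<delta>' \<and> g (1/2 + h) - g (1/2) < c * h" using h by blast
    qed
  qed
  define dd where "dd = g (3/4) - g (1/4)"
  have dd: "dd > 0" unfolding dd_def using g_less[of "1/4" "3/4"] by simp
  have "g (3/4) - g (1/4) \<le> dd * (3/4 - 1/4)"
  proof (rule dini_mono)
    show "continuous_on {1/4..3/4} g" by (rule continuous_on_subset[OF g_cont]) auto
    fix y :: real assume y: "1/4 \<le> y" "y < 3/4"
    then have yI: "y \<in> I" by auto
    have t: "tau y > 0" using tau_sg[OF yI] by simp
    show "flt g y dd"
      by (rule from_e_lt[OF yI allt[of "dd / (2 * tau y)"]]) (use t dd in auto)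
  qed simp
  then show False using dd by (simp add: dd_def)
qed

lemma main:
  assumes fa: "flt g (1/2) a" and fb: "fgt g (1/2) b" and ab: "a < b"
  shows False
proof -
  obtain h0 where h0: "0 < h0" "h0 < 1/2" "g (1/2 + h0) - g (1/2) < a * h0"
    using fa unfolding flt_def by (meson zero_less_divide_1_iff zero_less_numeral)
  have "g (1/2) < g (1/2 + h0)" using h0 by (intro g_less) auto
  then have "a * h0 > 0" using h0 by simp
  then have apos: "a > 0" using h0 by (simp add: zero_less_mult_iff)
  have bpos: "b > 0" using apos ab by simp
  obtain \<alpha> \<beta> L where abL: "0 < \<alpha>" "\<alpha> < \<beta>" "\<beta> < 1" "L > 0"
    and lip: "\<And>u v. \<alpha> \<le> u \<Longrightarrow> u < v \<Longrightarrow> v \<le> \<beta> \<Longrightarrow> g v - g u \<le> L * (v - u)"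
    using lipschitz_interval by blast
  define A where "A = {\<alpha><..<\<beta>}"
  have AI: "x \<in> I" if "x \<in> A" for x using that abL by (auto simp: A_def)
  have tbound: "b * tau x \<le> L" if x: "x \<in> A" for x
  proof (rule ccontr)
    assume "\<not> ?thesis"
    then have "fgt g x L" using from_e_gt[OF AI[OF x] fb _ abL(4)] by simp
    moreover have "\<beta> - x > 0" using x by (simp add: A_def)
    ultimately obtain h where h: "0 < h" "h < \<beta> - x" "g (x + h) - g x > L * h"
      unfolding fgt_def by blast
    have "g (x + h) - g x \<le> L * (x + h - x)" using h x by (intro lip) (auto simp: A_def)
    then show False using h by simp
  qed
  have bdd: "bdd_above (tau ` A)"
    by (rule bdd_aboveI2[of _ _ "L / b"]) (use tbound bpos in \<open>auto simp: field_simps mult.commute\<close>)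
  define M where "M = Sup (tau ` A)"
  define x0 where "x0 = (\<alpha> + \<beta>) / 2"
  have x0: "x0 \<in> A" using abL by (simp add: A_def x0_def)
  have Mge: "tau x \<le> M" if "x \<in> A" for x unfolding M_def by (rule cSUP_upper[OF that bdd])
  have Mpos: "M > 0" using Mge[OF x0] tau_sg[OF AI[OF x0]] by simp
  define c' where "c' = a * M + (b - a) * M / 2"
  have c'pos: "c' > 0" unfolding c'_def using apos Mpos ab
    by (intro add_pos_pos mult_pos_pos divide_pos_pos) auto
  have fl: "flt g x c'" if x: "x \<in> A" for x
  proof (rule from_e_lt[OF AI[OF x] fa _ ])
    have "a * tau x \<le> a * M" using Mge[OF x] apos by simp
    moreover have "(b - a) * M / 2 > 0" using ab Mpos by simp
    ultimately show "c' > a * tau x" by (simp add: c'_def)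
  qed (use apos in simp)
  have tb2: "b * tau x \<le> c'" if x: "x \<in> A" for x
  proof (rule ccontr)
    assume "\<not> ?thesis"
    then have "fgt g x c'" using from_e_gt[OF AI[OF x] fb _ c'pos] by simp
    moreover have "\<beta> - x > 0" using x by (simp add: A_def)
    ultimately obtain h where h: "0 < h" "h < \<beta> - x" "g (x + h) - g x > c' * h"
      unfolding fgt_def by blast
    have "g (x + h) - g x \<le> c' * (x + h - x)"
    proof (rule dini_mono)
      show "x \<le> x + h" using h by simp
      show "continuous_on {x..x+h} g" using x h abL
        by (intro continuous_on_subset[OF g_cont]) (auto simp: A_def)
      fix y assume "x \<le> y" "y < x + h"
      then have "y \<in> A" using x h by (auto simp: A_def)
      then show "flt g y c'" by (rule fl)
    qed
    then show False using h by simp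
  qed
  have "M \<le> c' / b" unfolding M_def
    by (rule cSUP_least) (use x0 tb2 bpos in \<open>auto simp: field_simps mult.commute\<close>)
  then have "b * M \<le> c'" using bpos by (simp add: field_simps)
  then have "(b - a) * M \<le> 0" by (simp add: c'_def field_simps)
  moreover have "(b - a) * M > 0" using ab Mpos by simp
  ultimately show False by linarith
qed

end



context gsetting begin

lemma deriv_e: "\<exists>D>0. (g has_real_derivative D) (at (1/2))"
proof -
  define Q where "Q = {c. fgt g (1/2) c}"
  obtain c2 where c2: "c2 > 0" "fgt g (1/2) c2" using pos_e by blast
  obtain C0 \<delta>0 where C0: "C0 > 0" "\<delta>0 > 0" "\<And>h. 0 < h \<Longrightarrow> h < \<delta>0 \<Longrightarrow> g (1/2 + h) - g (1/2) \<le> C0 * h"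
    using bound_e by blast
  have Qb: "c < C0" if "c \<in> Q" for c
  proof -
    have "fgt g (1/2) c" using that by (simp add: Q_def)
    then have fg: "\<exists>h. 0 < h \<and> h < \<delta>0 \<and> g (1/2 + h) - g (1/2) > c * h"
      using C0(2) unfolding fgt_def by simp
    then obtain h where "0 < h" "h < \<delta>0" "g (1/2 + h) - g (1/2) > c * h" by blast
    then show ?thesis using C0(3)[of h] by (smt (verit) mult_right_mono)
  qed
  have Qne: "Q \<noteq> {}" using c2 by (auto simp: Q_def)
  have bdd: "bdd_above Q" by (rule bdd_aboveI[of _ C0]) (use Qb in force)
  define D where "D = Sup Q"
  have Dge: "c2 \<le> D" unfolding D_def by (rule cSup_upper) (use c2 bdd in \<open>auto simp: Q_def\<close>)
  define q where "q h = (g (1/2 + h) - g (1/2)) / h" for h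
  have right: "(q \<longlongrightarrow> D) (at_right 0)"
    unfolding tendsto_iff
  proof (intro allI impI)
    fix \<epsilon> :: real assume e: "\<epsilon> > 0"
    have "\<exists>\<delta>1>0. \<forall>h. 0 < h \<and> h < \<delta>1 \<longrightarrow> g (1/2 + h) - g (1/2) \<le> (D + \<epsilon>/2) * h"
    proof (rule ccontr)
      assume "\<not> ?thesis"
      then have "fgt g (1/2) (D + \<epsilon>/2)" unfolding fgt_def by (meson not_le)
      then have "D + \<epsilon>/2 \<le> D" unfolding D_def by (intro cSup_upper bdd) (simp add: Q_def)
      then show False using e by simp
    qed
    then obtain \<delta>1 where d1: "\<delta>1 > 0" "\<And>h. 0 < h \<Longrightarrow> h < \<delta>1 \<Longrightarrow> g (1/2 + h) - g (1/2) \<le> (D + \<epsilon>/2) * h"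
      by blast
    have "\<exists>\<delta>2>0. \<forall>h. 0 < h \<and> h < \<delta>2 \<longrightarrow> g (1/2 + h) - g (1/2) \<ge> (D - \<epsilon>/2) * h"
    proof (rule ccontr)
      assume "\<not> ?thesis"
      then have fl: "flt g (1/2) (D - \<epsilon>/2)" unfolding flt_def by (meson not_le)
      have "D - \<epsilon>/4 < Sup Q" using e by (simp add: D_def)
      then obtain c where c: "c \<in> Q" "D - \<epsilon>/4 < c" using less_cSup_iff[OF Qne bdd] by blast
      show False by (rule main[OF fl, of c]) (use c e in \<open>auto simp: Q_def\<close>)
    qed
    then obtain \<delta>2 where d2: "\<delta>2 > 0" "\<And>h. 0 < h \<Longrightarrow> h < \<delta>2 \<Longrightarrow> g (1/2 + h) - g (1/2) \<ge> (D - \<epsilon>/2) * h"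
      by blast
    have "\<forall>h>0. h < min \<delta>1 \<delta>2 \<longrightarrow> dist (q h) D < \<epsilon>"
    proof (intro allI impI)
      fix h :: real assume h: "h > 0" "h < min \<delta>1 \<delta>2"
      have u: "q h \<le> D + \<epsilon>/2" using d1(2)[of h] h by (simp add: q_def field_simps)
      have l: "q h \<ge> D - \<epsilon>/2" using d2(2)[of h] h by (simp add: q_def field_simps)
      show "dist (q h) D < \<epsilon>" using u l e by (simp add: dist_real_def abs_le_iff)
    qed
    then show "\<forall>\<^sub>F h in at_right 0. dist (q h) D < \<epsilon>"
      unfolding eventually_at_right_field using d1 d2 by (intro exI[of _ "min \<delta>1 \<delta>2"]) auto
  qed
  have even: "q (- h) = q h" if h: "0 < h" "h < 1/2" for h
  proof -
    have "1/2 - h \<in> I" using h by auto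
    then have "g (1 - (1/2 - h)) = - g (1/2 - h)" using g_sym by blast
    then have "g (1/2 + h) = - g (1/2 + - h)" by simp
    then show ?thesis by (simp add: q_def g_half divide_simps)
  qed
  have "((\<lambda>h. q (- h)) \<longlongrightarrow> D) (at_right 0)"
  proof (rule Lim_transform_eventually[OF right])
    show "\<forall>\<^sub>F h in at_right 0. q h = q (- h)"
      unfolding eventually_at_right_field using even by (intro exI[of _ "1/2"]) auto
  qed
  then have left: "(q \<longlongrightarrow> D) (at_left 0)"
    by (simp add: filterlim_at_left_to_right)
  have "(q \<longlongrightarrow> D) (at 0)" by (rule filterlim_split_at[OF left right])
  then have "(g has_real_derivative D) (at (1/2))" unfolding DERIV_def q_def[abs_def] .
  then show ?thesis using Dge c2 by (intro exI[of _ D]) auto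
qed

lemma deriv_all:
  assumes dg: "(g has_real_derivative D) (at (1/2))" and x: "x \<in> I"
  shows "(g has_real_derivative D * tau x) (at x)"
proof -
  have dT: "(T x has_real_derivative tau x) (at x)" unfolding tau_def using T_deriv[OF x x] .
  have "(g \<circ> T x has_real_derivative D * tau x) (at x)"
    by (rule DERIV_chain) (use dg dT in \<open>simp_all add: T_self[of x]\<close>)
  then have "((\<lambda>y. g (T x y) + g x) has_real_derivative D * tau x + 0) (at x)"
    by (intro DERIV_add) (auto simp: o_def)
  then have "((\<lambda>y. g (T x y) + g x) has_real_derivative D * tau x) (at x)" by simp
  then show ?thesis
    by (rule has_field_derivative_transform_within_open[of _ _ _ I]) (use x in \<open>auto simp: g_T\<close>)
qed

end


context gsetting begin
lemma final:
  assumes c: "c \<in> I"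
  shows "\<exists>b :: real \<Rightarrow> real.
      (\<forall>a\<in>{0<..<1}. b a \<in> {0<..<1})
    \<and> b c = 1/2
    \<and> (\<forall>a\<in>{0<..<1}. (b has_real_derivative (deriv g a / deriv g (b a))) (at a))
    \<and> (\<forall>y :: real \<Rightarrow> real.
          (\<forall>a\<in>{0<..<1}. y a \<in> {0<..<1}) \<and> y c = 1/2
          \<and> (\<forall>a\<in>{0<..<1}. (y has_real_derivative (deriv g a / deriv g (y a))) (at a))
          \<longrightarrow> (\<forall>a\<in>{0<..<1}. y a = b a))
    \<and> {p \<in> {0<..<1} \<times> {0<..<1}. J p = c} = {(a, b a) | a. a \<in> {0<..<1}}"
proof -
  obtain D where D: "D > 0" "(g has_real_derivative D) (at (1/2))" using deriv_e by blast
  define G where "G y = D * tau y" for y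
  have dG: "(g has_real_derivative G y) (at y)" if "y \<in> I" for y
    unfolding G_def using deriv_all[OF D(2) that] .
  have Gpos: "G y > 0" if "y \<in> I" for y unfolding G_def using D tau_sg[OF that] by simp
  have derivg: "deriv g y = G y" if "y \<in> I" for y using DERIV_imp_deriv[OF dG[OF that]] .
  define b where "b = T c"
  have bI: "b a \<in> I" for a unfolding b_def by (rule T_in)
  have bc: "b c = 1/2" by (simp add: b_def T_self)
  have bder: "(b has_real_derivative (deriv g a / deriv g (b a))) (at a)" if a: "a \<in> I" for a
  proof -
    have db: "(b has_real_derivative deriv b a) (at a)" unfolding b_def using T_deriv[OF c a] .
    have "(g \<circ> b has_real_derivative G (b a) * deriv b a) (at a)"
      by (rule DERIV_chain[OF dG[OF bI] db])
    moreover have "(g \<circ> b has_real_derivative G a - 0) (at a)"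
    proof -
      have "((\<lambda>y. g y - g c) has_real_derivative G a - 0) (at a)"
        by (intro DERIV_diff dG a) auto
      then show ?thesis
        by (rule has_field_derivative_transform_within_open[of _ _ _ I]) (use a in \<open>auto simp: b_def g_T\<close>)
    qed
    ultimately have "G (b a) * deriv b a = G a" using DERIV_unique by fastforce
    moreover have "G (b a) > 0" using Gpos[OF bI] .
    ultimately have "deriv b a = G a / G (b a)" by (simp add: field_simps)
    then show ?thesis using db derivg[OF a] derivg[OF bI] by simp
  qed
  have uniq: "\<forall>a\<in>I. y a = b a" if ys: "(\<forall>a\<in>I. y a \<in> I) \<and> y c = 1/2
          \<and> (\<forall>a\<in>I. (y has_real_derivative (deriv g a / deriv g (y a))) (at a))" for y
  proof
    fix a assume a: "a \<in> I"
    define f where "f t = g (y t) - g t" for t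
    have df: "(f has_real_derivative 0) (at t)" if t: "t \<in> I" for t
    proof -
      have yt: "y t \<in> I" using ys t by blast
      have "(y has_real_derivative deriv g t / deriv g (y t)) (at t)" using ys t by blast
      then have dy: "(y has_real_derivative G t / G (y t)) (at t)"
        using derivg[OF t] derivg[OF yt] by simp
      have "(g \<circ> y has_real_derivative G (y t) * (G t / G (y t))) (at t)"
        by (rule DERIV_chain[OF dG[OF yt] dy])
      then have "(g \<circ> y has_real_derivative G t) (at t)" using Gpos[OF yt] by simp
      then have "((\<lambda>t. (g \<circ> y) t - g t) has_real_derivative G t - G t) (at t)"
        by (intro DERIV_diff dG t)
      then show ?thesis by (simp add: f_def[abs_def] o_def)
    qed
    have "f a = f c" by (rule DERIV_isconst3[of 0 1]) (use a c df in auto)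
    then have "g (y a) = g a - g c" using ys by (simp add: f_def g_half)
    also have "\<dots> = g (b a)" by (simp add: b_def g_T)
    finally have "g (y a) = g (b a)" .
    then show "y a = b a" using g_inj ys a bI unfolding inj_on_def by blast
  qed
  have level: "{p \<in> I \<times> I. J p = c} = {(a, b a) | a. a \<in> I}"
  proof (intro set_eqI iffI)
    fix p assume "p \<in> {p \<in> I \<times> I. J p = c}"
    then obtain a b' where p: "p = (a, b')" "a \<in> I" "b' \<in> I" "k (g a - g b') = c"
      by (auto simp: J_def)
    then have "g a - g b' = g c" using g_k by metis
    then have "g b' = g (b a)" by (simp add: b_def g_T)
    then have "b' = b a" using g_inj p bI unfolding inj_on_def by blast
    then show "p \<in> {(a, b a) | a. a \<in> I}" using p by auto
  next
    fix p assume "p \<in> {(a, b a) | a. a \<in> I}"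
    then obtain a where p: "p = (a, b a)" "a \<in> I" by auto
    have "J p = k (g a - g (b a))" by (simp add: p J_def)
    also have "g a - g (b a) = g c" by (simp add: b_def g_T)
    finally have "J p = c" using k_g[OF c] by simp
    then show "p \<in> {p \<in> I \<times> I. J p = c}" using p bI by auto
  qed
  have uniq': "\<forall>y :: real \<Rightarrow> real.
          (\<forall>a\<in>I. y a \<in> I) \<and> y c = 1/2
          \<and> (\<forall>a\<in>I. (y has_real_derivative (deriv g a / deriv g (y a))) (at a))
          \<longrightarrow> (\<forall>a\<in>I. y a = b a)"
    using uniq by blast
  have bI': "\<forall>a\<in>I. b a \<in> I" using bI by blast
  have bder': "\<forall>a\<in>I. (b has_real_derivative (deriv g a / deriv g (b a))) (at a)" using bder by blast
  show ?thesis
    apply (rule exI[of _ b])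
    apply (intro conjI)
        apply (rule bI')
       apply (rule bc)
      apply (rule bder')
     apply (rule uniq')
    apply (rule level)
    done
qed

end



theorem proposition5p9:
  fixes g :: "real \<Rightarrow> real" and J :: "real \<times> real \<Rightarrow> real" and c :: real
  assumes g_cont: "continuous_on {0<..<1} g"
    and g_mono: "strict_mono_on {0<..<1} g"
    and g_sym: "\<forall>a\<in>{0<..<1}. g (1 - a) = - g a"
    and g_lim: "filterlim g at_bot (at_right 0)"
    and J_def: "J = (\<lambda>(a, b). inv_into {0<..<1} g (g a - g b))"
    and J_diff: "\<forall>p\<in>{0<..<1} \<times> {0<..<1}. J differentiable (at p)"
    and c: "0 < c" "c < 1"
  shows "\<exists>b :: real \<Rightarrow> real.
      (\<forall>a\<in>{0<..<1}. b a \<in> {0<..<1})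
    \<and> b c = 1/2
    \<and> (\<forall>a\<in>{0<..<1}. (b has_real_derivative (deriv g a / deriv g (b a))) (at a))
    \<and> (\<forall>y :: real \<Rightarrow> real.
          (\<forall>a\<in>{0<..<1}. y a \<in> {0<..<1}) \<and> y c = 1/2
          \<and> (\<forall>a\<in>{0<..<1}. (y has_real_derivative (deriv g a / deriv g (y a))) (at a))
          \<longrightarrow> (\<forall>a\<in>{0<..<1}. y a = b a))
    \<and> {p \<in> {0<..<1} \<times> {0<..<1}. J p = c} = {(a, b a) | a. a \<in> {0<..<1}}"
proof -
  interpret gsetting g
    using g_cont g_mono g_sym g_lim J_diff J_def by unfold_locales simp_all
  have JJ: "J = gsetting.J g" unfolding assms(5) by (rule J_orig)
  have cI: "c \<in> {0<..<1}" using c by simp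
  show ?thesis unfolding JJ by (rule final[OF cI])
qed


end
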